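(* Let $t$ be a term and $\vec x=x_1\dots x_n$ a vector of pairwise distinct program variables. If $$\vec x(1)=\vec x(2)\ \vdash\ \mathrm{wp}\,[1:t,\ 2:(t;t)]\,\{\vec x(1)=\vec x(2)\}$$ and $t$ is projectable from every store (for every store $s$ there exist $v,s'$ with $t,s\Downarrow v,s'$), then $$\vec x(1)=\vec x(2)\ \vdash\ \mathrm{wp}\,[1:t,2:t]\,\{\vec x(1)=\vec x(2)\}.$$ Moreover, the projectability hypothesis cannot be dropped: there exist a term $t$ and a vector $\vec x$ satisfying the first entailment but not the conclusion.
   Context: Setting. $\mathrm{Val}=\mathbb{Z}$; $\mathrm{PVar}$ is a countably infinite set of program variables; a store is a function $s:\mathrm{PVar}\to\mathrm{Val}$; indices are $\mathrm{Idx}=\mathbb{N}$. Terms of a first-order imperative language are generated by $t ::= v \mid x \mid * \mid t\oplus t \mid \mathtt{skip}\mid x:=t \mid t;t \mid \mathtt{if}\ t\ \mathtt{then}\ t\ \mathtt{else}\ t \mid \mathtt{while}\ t\ \mathtt{do}\ t$ ($\oplus$ primitive operations such as $+,-,<$), with a nondeterministic big-step semantics $t,s\Downarrow v,s'$ ($t$ run from $s$ may terminate with return value $v$ and final store $s'$; $*$ returns an arbitrary integer; nonterminating runs yield no judgment; $t_1;t_2,s\Downarrow v,s''$ iff $t_1,s\Downarrow\_,s'$ and $t_2,s'\Downarrow \_,s''$ for some $s'$). A hyper-term is a finitely supported partial map from $\mathrm{Idx}$ to terms, written $[i_1:t_1,\dots,i_n:t_n]$; a hyper-store is a total function $\mathbf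 s:\mathrm{Idx}\to\mathrm{Store}$. $\mathbf t,\mathbf s\Downarrow\mathbf v,\mathbf s'$ holds iff for every $i\in\mathrm{supp}(\mathbf t)$, $\mathbf t(i),\mathbf s(i)\Downarrow\mathbf v(i),\mathbf s'(i)$, and for every $i\notin\mathrm{supp}(\mathbf t)$, $\mathbf s'(i)=\mathbf s(i)$. A hyper-assertion is a predicate on hyper-stores; $P\vdash R$ means $\forall\mathbf s.\ P(\mathbf s)\Rightarrow R(\mathbf s)$. $\mathrm{wp}\,\mathbf t\,\{Q\}(\mathbf s):\iff\forall\mathbf v,\mathbf s'.\ (\mathbf t,\mathbf s\Downarrow\mathbf v,\mathbf s')\Rightarrow Q(\mathbf s')$ for a hyper-assertion $Q$. $\vec x(i)=\vec x(j)$ is the hyper-assertion $\forall k.\ \mathbf s(i)(x_k)=\mathbf s(j)(x_k)$. *)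

theory Defs
  imports Main
begin

type_synonym val = int
type_synonym pvar = nat
type_synonym store = "pvar \<Rightarrow> val"
type_synonym idx = nat

datatype "term" =
    Val val
  | Var pvar
  | Star
  | Op "val \<Rightarrow> val \<Rightarrow> val" "term" "term"
  | Skip
  | Assign pvar "term"
  | Seq "term" "term"
  | If "term" "term" "term"
  | While "term" "term"

(* nondeterministic big-step semantics  t, s \<Down> v, s'
   conventions: skip and while return 0; assignment returns the assigned value;
   a condition counts as true iff its value is nonzero *)
inductive big :: "term \<Rightarrow> store \<Rightarrow> val \<Rightarrow> store \<Rightarrow> bool" where
  BVal: "big (Val v) s v s"
| BVar: "big (Var x) s (s x) s"
| BStar: "big Star s v s"
| BOp: "big t1 s v1 s1 \<Longrightarrow> big t2 s1 v2 s2 \<Longrightarrow> big (Op f t1 t2) s (f v1 v2) s2"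
| BSkip: "big Skip s 0 s"
| BAssign: "big t s v s' \<Longrightarrow> big (Assign x t) s v (s'(x := v))"
| BSeq: "big t1 s v1 s' \<Longrightarrow> big t2 s' v s'' \<Longrightarrow> big (Seq t1 t2) s v s''"
| BIfT: "big b s c s' \<Longrightarrow> c \<noteq> 0 \<Longrightarrow> big t1 s' v s'' \<Longrightarrow> big (If b t1 t2) s v s''"
| BIfF: "big b s c s' \<Longrightarrow> c = 0 \<Longrightarrow> big t2 s' v s'' \<Longrightarrow> big (If b t1 t2) s v s''"
| BWhileF: "big b s c s' \<Longrightarrow> c = 0 \<Longrightarrow> big (While b t) s 0 s'"
| BWhileT: "big b s c s' \<Longrightarrow> c \<noteq> 0 \<Longrightarrow> big t s' w s'' \<Longrightarrow> big (While b t) s'' v s'''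
            \<Longrightarrow> big (While b t) s v s'''"

type_synonym hterm = "idx \<rightharpoonup> term"
type_synonym hstore = "idx \<Rightarrow> store"
type_synonym hval = "idx \<Rightarrow> val"
type_synonym hassn = "hstore \<Rightarrow> bool"

definition hbig :: "hterm \<Rightarrow> hstore \<Rightarrow> hval \<Rightarrow> hstore \<Rightarrow> bool" where
  "hbig T S V S' \<longleftrightarrow>
     (\<forall>i t. T i = Some t \<longrightarrow> big t (S i) (V i) (S' i)) \<and>
     (\<forall>i. T i = None \<longrightarrow> S' i = S i)"

definition wp :: "hterm \<Rightarrow> hassn \<Rightarrow> hassn" where
  "wp T Q S \<longleftrightarrow> (\<forall>V S'. hbig T S V S' \<longrightarrow> Q S')"

definition entails :: "hassn \<Rightarrow> hassn \<Rightarrow> bool" where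
  "entails P R \<longleftrightarrow> (\<forall>S. P S \<longrightarrow> R S)"

definition veq :: "pvar list \<Rightarrow> idx \<Rightarrow> idx \<Rightarrow> hassn" where
  "veq xs i j S \<longleftrightarrow> (\<forall>k<length xs. S i (xs ! k) = S j (xs ! k))"

definition projectable :: "term \<Rightarrow> bool" where
  "projectable t \<longleftrightarrow> (\<forall>s. \<exists>v s'. big t s v s')"

end

theory Submission
  imports Defs
begin

inductive_cases VarE: "big (Var x) s v s'"
inductive_cases SkipE: "big Skip s v s'"
inductive_cases SeqE: "big (Seq a b) s v s'"
inductive_cases AssignE: "big (Assign x a) s v s'"
inductive_cases OpE: "big (Op f a b) s v s'"
inductive_cases StarE: "big Star s v s'"
inductive_cases ValE: "big (Val c) s v s'"

lemma loop_zero: "big w s v s' \<Longrightarrow> w = While (Var x) Skip \<Longrightarrow> s x = 0 \<and> s' = s"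
  by (induction rule: big.induct) (auto elim: VarE SkipE)

definition tc :: "term" where
  "tc = Seq (While (Var 0) Skip) (Assign 0 (Op (\<lambda>a b. if a = 0 then 1 else 2) Star (Val 0)))"

lemma tc_out: "big tc s v s' \<Longrightarrow> s' 0 \<noteq> 0"
  unfolding tc_def
  by (auto elim!: SeqE AssignE OpE StarE ValE split: if_splits)

lemma tc_in: "big tc s v s' \<Longrightarrow> s 0 = 0"
  unfolding tc_def
  by (auto elim!: SeqE dest: loop_zero)

lemma tc_run: "s 0 = 0 \<Longrightarrow> (a::int) = a \<Longrightarrow> big tc s (if a = 0 then 1 else 2) (s(0 := (if a = 0 then 1 else 2)))"
  unfolding tc_def
  apply (rule BSeq)
   apply (rule BWhileF[OF BVar], simp)
  apply (rule BAssign)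
  using BOp[OF BStar[of s a] BVal[of 0 s], where f="\<lambda>a b. if a = 0 then 1 else 2"] by simp

lemma part1:
  assumes H: "entails (veq xs 1 2) (wp [1 \<mapsto> t, 2 \<mapsto> Seq t t] (veq xs 1 2))"
    and P: "projectable t"
  shows "entails (veq xs 1 2) (wp [1 \<mapsto> t, 2 \<mapsto> t] (veq xs 1 2))"
  unfolding entails_def wp_def
proof (intro allI impI)
  fix S V S'
  assume E: "veq xs 1 2 S" and B: "hbig [1 \<mapsto> t, 2 \<mapsto> t] S V S'"
  have b1: "big t (S 1) (V 1) (S' 1)" and b2: "big t (S 2) (V 2) (S' 2)"
    using B unfolding hbig_def by auto
  obtain v2 s2 where b3: "big t (S' 2) v2 s2" using P unfolding projectable_def by blast
  have bs: "big (Seq t t) (S 2) v2 s2" using BSeq[OF b2 b3] .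
  define A :: hstore where "A = (\<lambda>i. if i = 2 then s2 else S' i)"
  define W :: hval where "W = (\<lambda>i. if i = 2 then v2 else V i)"
  have "hbig [1 \<mapsto> t, 2 \<mapsto> Seq t t] S W A"
    using B b1 bs unfolding hbig_def A_def W_def by auto
  hence r1: "veq xs 1 2 A" using H E unfolding entails_def wp_def by blast
  define S2 :: hstore where "S2 = (\<lambda>i. if i = 1 then S 2 else S i)"
  define A2 :: hstore where "A2 = (\<lambda>i. if i = 1 then S' 2 else if i = 2 then s2 else S i)"
  define W2 :: hval where "W2 = (\<lambda>i. if i = 1 then V 2 else v2)"
  have "veq xs 1 2 S2" unfolding veq_def S2_def by simp
  moreover have "hbig [1 \<mapsto> t, 2 \<mapsto> Seq t t] S2 W2 A2"
    using b2 bs unfolding hbig_def A2_def W2_def S2_def by auto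
  ultimately have r2: "veq xs 1 2 A2" using H unfolding entails_def wp_def by blast
  show "veq xs 1 2 S'" using r1 r2 unfolding veq_def A_def A2_def by auto
qed

theorem mainTheorem20:
  shows "(\<forall>(t::term) (xs::pvar list).
            distinct xs \<longrightarrow>
            entails (veq xs 1 2) (wp [1 \<mapsto> t, 2 \<mapsto> Seq t t] (veq xs 1 2)) \<longrightarrow>
            projectable t \<longrightarrow>
            entails (veq xs 1 2) (wp [1 \<mapsto> t, 2 \<mapsto> t] (veq xs 1 2)))
       \<and> (\<exists>(t::term) (xs::pvar list).
            distinct xs \<and>
            entails (veq xs 1 2) (wp [1 \<mapsto> t, 2 \<mapsto> Seq t t] (veq xs 1 2)) \<and>
            \<not> entails (veq xs 1 2) (wp [1 \<mapsto> t, 2 \<mapsto> t] (veq xs 1 2)))"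
proof
  show "\<forall>t xs. distinct xs \<longrightarrow>
            entails (veq xs 1 2) (wp [1 \<mapsto> t, 2 \<mapsto> Seq t t] (veq xs 1 2)) \<longrightarrow>
            projectable t \<longrightarrow>
            entails (veq xs 1 2) (wp [1 \<mapsto> t, 2 \<mapsto> t] (veq xs 1 2))"
    using part1 by blast
next
  have h1: "entails (veq [0] 1 2) (wp [1 \<mapsto> tc, 2 \<mapsto> Seq tc tc] (veq [0] 1 2))"
  proof -
    have "\<not> big (Seq tc tc) s v s'" for s v s'
      by (auto elim!: SeqE dest: tc_out tc_in)
    thus ?thesis unfolding entails_def wp_def hbig_def by auto
  qed
  define S :: hstore where "S = (\<lambda>i _. 0)"
  define S' :: hstore where "S' = (\<lambda>i. if i = 1 then (S i)(0 := 1) else if i = 2 then (S i)(0 := 2) else S i)"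
  define V :: hval where "V = (\<lambda>i. if i = 1 then 1 else 2)"
  have "hbig [1 \<mapsto> tc, 2 \<mapsto> tc] S V S'"
    unfolding hbig_def S'_def V_def
    using tc_run[of "S 1" 0] tc_run[of "S 2" 1] unfolding S_def by auto
  moreover have "\<not> veq [0] 1 2 S'" unfolding veq_def S'_def by simp
  moreover have "veq [0] 1 2 S" unfolding veq_def S_def by simp
  ultimately have h2: "\<not> entails (veq [0] 1 2) (wp [1 \<mapsto> tc, 2 \<mapsto> tc] (veq [0] 1 2))"
    unfolding entails_def wp_def by blast
  show "\<exists>t xs. distinct xs \<and>
            entails (veq xs 1 2) (wp [1 \<mapsto> t, 2 \<mapsto> Seq t t] (veq xs 1 2)) \<and>
            \<not> entails (veq xs 1 2) (wp [1 \<mapsto> t, 2 \<mapsto> t] (veq xs 1 2))"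
    using h1 h2 by (intro exI[of _ tc] exI[of _ "[0]"]) simp
qed

end
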